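(* For a stationary policy $\pi$ and $h\ge0$ let $$\overline V^\pi_{0:h}(s):=\min_{\{\hat P_t\}_{t=0}^h}\mathbb E\Big[\sum_{t=0}^h\gamma^t\big(r(s_t,a_t)+\gamma D(\hat P_{t;s_t,a_t},P_{s_t,a_t})\big)\,\Big|\,s_0=s\Big],$$ with $a_t\sim\pi(\cdot|s_t)$, $s_{t+1}\sim\hat P_{t;s_t,a_t}$, and set $\overline V^\pi_{0:-1}:=0$. Then for all $h\ge-1$, $\overline V^\pi_{0:h+1}=\mathcal T^\pi\overline V^\pi_{0:h}$, where $[\mathcal T^\pi V](s)=\sum_a\pi(a|s)(r(s,a)-\gamma\sigma(P_{s,a},V))$. Moreover, for every initial state $s$ the minimum is attained by the same kernels $\hat P^\pi_{t|h;s,a}\in\arg\min_{\hat\mu\in\Delta(\mathcal S)}\big(D(\hat\mu,P_{s,a})+\mathbb E_{s'\sim\hat\mu}\overline V^\pi_{0:h-t-1}(s')\big)$, $t=0,\dots,h$.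
   Context: $\mathcal S$, $\mathcal A$ finite; $\Delta(\mathcal X)$ is the probability simplex over $\mathcal X$. $P=\{P_{s,a}\}$, $P_{s,a}\in\Delta(\mathcal S)$, is the nominal kernel, $r:\mathcal S\times\mathcal A\to[0,1]$, $\gamma\in[0,1)$. A stationary policy is a map $\pi:\mathcal S\to\Delta(\mathcal A)$. A function $\sigma:\mathbb R^{\mathcal S}\to\mathbb R$ is a convex risk measure if (i) $V'\le V$ pointwise implies $\sigma(V)\le\sigma(V')$; (ii) $\sigma(V+m)=\sigma(V)-m$ for constants $m$; (iii) $\sigma$ is convex. For each $(s,a)$ a convex risk measure $\sigma(P_{s,a},\cdot)$ is given and $D(\hat\mu,P_{s,a}):=\sup_{V}\big(-\sigma(P_{s,a},V)-\mathbb E_{s'\sim\hat\mu}V(s')\big)$; it is known that then $\sigma(P_{s,a},V)=\sup_{\hat\mu\in\Delta(\mathcal S)}(-\mathbb E_{\hat\mu}V-D(\hat\mu,P_{s,a}))$ and $D(\cdot,P_{s,a})$ is convex and lower semicontinuous. The minimum is over sequences of time-dependent kernels $\hat P_{t;s,a}\in\Delta(\mathcal S)$. *)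

theory Defs
  imports Complex_Main "HOL-Library.Extended_Real"
begin

definition simplex :: "('x::finite \<Rightarrow> real) set" where
  "simplex = {\<mu>. (\<forall>x. 0 \<le> \<mu> x) \<and> sum \<mu> UNIV = 1}"

definition expect :: "('x::finite \<Rightarrow> real) \<Rightarrow> ('x \<Rightarrow> real) \<Rightarrow> real" where
  "expect \<mu> V = (\<Sum>x\<in>UNIV. \<mu> x * V x)"

definition convex_risk_measure :: "(('x::finite \<Rightarrow> real) \<Rightarrow> real) \<Rightarrow> bool" where
  "convex_risk_measure \<sigma> \<longleftrightarrow>
     (\<forall>V V'. (\<forall>x. V' x \<le> V x) \<longrightarrow> \<sigma> V \<le> \<sigma> V') \<and>
     (\<forall>V m. \<sigma> (\<lambda>x. V x + m) = \<sigma> V - m) \<and>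
     (\<forall>V W t. 0 \<le> t \<and> t \<le> 1 \<longrightarrow>
        \<sigma> (\<lambda>x. t * V x + (1 - t) * W x) \<le> t * \<sigma> V + (1 - t) * \<sigma> W)"

definition penalty :: "(('x::finite \<Rightarrow> real) \<Rightarrow> real) \<Rightarrow> ('x \<Rightarrow> real) \<Rightarrow> ereal" where
  "penalty \<sigma> \<mu> = (SUP V. ereal (- \<sigma> V - expect \<mu> V))"

text \<open>Trajectories of length n are lists [(s_0,a_0),...,(s_{n-1},a_{n-1})].
  K t s a is the (time-dependent) kernel hat P_{t;s,a}.\<close>
definition traj_prob ::
  "('s::finite \<Rightarrow> 'a::finite \<Rightarrow> real) \<Rightarrow> (nat \<Rightarrow> 's \<Rightarrow> 'a \<Rightarrow> 's \<Rightarrow> real) \<Rightarrow> 's \<Rightarrow> ('s \<times> 'a) list \<Rightarrow> real" where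
  "traj_prob \<pi> K s0 xs =
     (if xs \<noteq> [] \<and> fst (hd xs) = s0 then
        (\<Prod>t<length xs. \<pi> (fst (xs ! t)) (snd (xs ! t))) *
        (\<Prod>t<length xs - 1. K t (fst (xs ! t)) (snd (xs ! t)) (fst (xs ! Suc t)))
      else 0)"

definition traj_cost ::
  "(('s::finite \<Rightarrow> real) \<Rightarrow> ('s \<Rightarrow> real) \<Rightarrow> real) \<Rightarrow> ('s \<Rightarrow> 'a::finite \<Rightarrow> 's \<Rightarrow> real) \<Rightarrow>
   ('s \<Rightarrow> 'a \<Rightarrow> real) \<Rightarrow> real \<Rightarrow> (nat \<Rightarrow> 's \<Rightarrow> 'a \<Rightarrow> 's \<Rightarrow> real) \<Rightarrow> ('s \<times> 'a) list \<Rightarrow> ereal" where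
  "traj_cost sig P r \<gamma> K xs =
     (\<Sum>t<length xs. ereal (\<gamma> ^ t) *
        (ereal (r (fst (xs ! t)) (snd (xs ! t))) +
         ereal \<gamma> * penalty (sig (P (fst (xs ! t)) (snd (xs ! t))))
                           (K t (fst (xs ! t)) (snd (xs ! t)))))"

text \<open>Expected cost E[sum_{t=0}^{n-1} gamma^t (r + gamma D(hat P_t, P)) | s_0 = s0]
  (horizon h = n - 1).\<close>
definition exp_cost ::
  "(('s::finite \<Rightarrow> real) \<Rightarrow> ('s \<Rightarrow> real) \<Rightarrow> real) \<Rightarrow> ('s \<Rightarrow> 'a::finite \<Rightarrow> 's \<Rightarrow> real) \<Rightarrow>
   ('s \<Rightarrow> 'a \<Rightarrow> real) \<Rightarrow> real \<Rightarrow> ('s \<Rightarrow> 'a \<Rightarrow> real) \<Rightarrow> (nat \<Rightarrow> 's \<Rightarrow> 'a \<Rightarrow> 's \<Rightarrow> real) \<Rightarrow>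
   nat \<Rightarrow> 's \<Rightarrow> ereal" where
  "exp_cost sig P r \<gamma> \<pi> K n s0 =
     (\<Sum>xs\<in>{xs. length xs = n}. ereal (traj_prob \<pi> K s0 xs) * traj_cost sig P r \<gamma> K xs)"

definition Vbar ::
  "(('s::finite \<Rightarrow> real) \<Rightarrow> ('s \<Rightarrow> real) \<Rightarrow> real) \<Rightarrow> ('s \<Rightarrow> 'a::finite \<Rightarrow> 's \<Rightarrow> real) \<Rightarrow>
   ('s \<Rightarrow> 'a \<Rightarrow> real) \<Rightarrow> real \<Rightarrow> ('s \<Rightarrow> 'a \<Rightarrow> real) \<Rightarrow> int \<Rightarrow> 's \<Rightarrow> ereal" where
  "Vbar sig P r \<gamma> \<pi> h s =
     (if h < 0 then 0
      else (INF K\<in>{K. \<forall>t s a. K t s a \<in> simplex}. exp_cost sig P r \<gamma> \<pi> K (nat (h + 1)) s))"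

definition Tpi ::
  "(('s::finite \<Rightarrow> real) \<Rightarrow> ('s \<Rightarrow> real) \<Rightarrow> real) \<Rightarrow> ('s \<Rightarrow> 'a::finite \<Rightarrow> 's \<Rightarrow> real) \<Rightarrow>
   ('s \<Rightarrow> 'a \<Rightarrow> real) \<Rightarrow> real \<Rightarrow> ('s \<Rightarrow> 'a \<Rightarrow> real) \<Rightarrow> ('s \<Rightarrow> real) \<Rightarrow> 's \<Rightarrow> real" where
  "Tpi sig P r \<gamma> \<pi> V s = (\<Sum>a\<in>UNIV. \<pi> s a * (r s a - \<gamma> * sig (P s a) V))"

definition argmin_set ::
  "(('s::finite \<Rightarrow> real) \<Rightarrow> ('s \<Rightarrow> real) \<Rightarrow> real) \<Rightarrow> ('s \<Rightarrow> 'a::finite \<Rightarrow> 's \<Rightarrow> real) \<Rightarrow>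
   ('s \<Rightarrow> ereal) \<Rightarrow> 's \<Rightarrow> 'a \<Rightarrow> ('s \<Rightarrow> real) set" where
  "argmin_set sig P V s a =
     {\<mu> \<in> simplex. \<forall>\<nu> \<in> simplex.
        penalty (sig (P s a)) \<mu> + (\<Sum>s'\<in>UNIV. ereal (\<mu> s') * V s')
        \<le> penalty (sig (P s a)) \<nu> + (\<Sum>s'\<in>UNIV. ereal (\<nu> s') * V s')}"

end

theory Submission imports Defs "HOL-Analysis.Cartesian_Euclidean_Space" begin

lemma ereal_nn_distrib:
  assumes "0 \<le> c" shows "ereal c * (x + y) = ereal c * x + ereal c * y"
proof (cases "c = 0")
  case True then show ?thesis by (simp add: zero_ereal_def[symmetric])
next
  case False then have "c > 0" using assms by simp
  then show ?thesis by (cases x; cases y) (auto simp: distrib_left)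
qed

lemma ereal_nn_sum_distrib:
  assumes "0 \<le> c" shows "ereal c * sum f A = (\<Sum>i\<in>A. ereal c * f i)"
proof (cases "finite A")
  case True then show ?thesis
    by (induction A rule: finite_induct) (auto simp: ereal_nn_distrib[OF assms])
qed simp

lemma ereal_nn_add_left:
  assumes "0 \<le> a" "0 \<le> b" shows "ereal (a + b) * x = ereal a * x + ereal b * x"
proof (cases "a = 0 \<or> b = 0")
  case True then show ?thesis by (auto simp: zero_ereal_def[symmetric])
next
  case False then have "a > 0" "b > 0" using assms by auto
  then show ?thesis by (cases x) (auto simp: distrib_right)
qed

lemma ereal_sum_left:
  assumes "\<And>i. i \<in> A \<Longrightarrow> 0 \<le> a i" shows "ereal (sum a A) * x = (\<Sum>i\<in>A. ereal (a i) * x)"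
  using assms
proof (induction A rule: infinite_finite_induct)
  case (insert i A)
  then show ?case by (simp add: ereal_nn_add_left sum_nonneg)
qed auto


lemma simplex_nonneg: "\<mu> \<in> simplex \<Longrightarrow> 0 \<le> \<mu> x"
  by (simp add: simplex_def)
lemma simplex_sum: "\<mu> \<in> simplex \<Longrightarrow> sum \<mu> UNIV = 1"
  by (simp add: simplex_def)

lemma lists_Suc_eq:
  "{xs. length xs = Suc n} = (\<lambda>(x,ys). x # ys) ` (UNIV \<times> {ys. length ys = n})"
  by (auto simp: length_Suc_conv image_iff)

lemma sum_lists_Suc:
  fixes F :: "('x::finite) list \<Rightarrow> 'b::comm_monoid_add"
  shows "(\<Sum>xs\<in>{xs. length xs = Suc n}. F xs) = (\<Sum>x\<in>UNIV. \<Sum>ys\<in>{ys. length ys = n}. F (x # ys))"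
proof -
  have inj: "inj_on (\<lambda>(x,ys). x # ys) (UNIV \<times> {ys. length ys = n})"
    by (auto simp: inj_on_def)
  have "(\<Sum>xs\<in>{xs. length xs = Suc n}. F xs) = (\<Sum>p\<in>UNIV \<times> {ys. length ys = n}. F (fst p # snd p))"
    unfolding lists_Suc_eq by (subst sum.reindex[OF inj]) (simp add: case_prod_beta)
  also have "\<dots> = (\<Sum>x\<in>UNIV. \<Sum>ys\<in>{ys. length ys = n}. F (x # ys))"
    using sum.cartesian_product[where g="\<lambda>x ys. F (x#ys)" and A=UNIV and B="{ys. length ys = n}"]
    by (simp add: case_prod_beta)
  finally show ?thesis .
qed

lemma sum_lists_Suc_state:
  fixes F :: "('s::finite \<times> 'a::finite) list \<Rightarrow> 'b::comm_monoid_add"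
  assumes "\<And>s' a ys. s' \<noteq> s \<Longrightarrow> F ((s',a) # ys) = 0"
  shows "(\<Sum>xs\<in>{xs. length xs = Suc n}. F xs) = (\<Sum>a\<in>UNIV. \<Sum>ys\<in>{ys. length ys = n}. F ((s,a) # ys))"
proof -
  let ?g = "\<lambda>x. \<Sum>ys\<in>{ys. length ys = n}. F (x # ys)"
  have "sum ?g UNIV = sum ?g (Pair s ` UNIV)"
    by (rule sum.mono_neutral_right) (auto simp: assms image_iff)
  also have "\<dots> = (\<Sum>a\<in>UNIV. ?g (s,a))"
    by (subst sum.reindex) (auto simp: inj_on_def)
  finally show ?thesis by (simp add: sum_lists_Suc)
qed

lemma traj_prob_other: "s1 \<noteq> fst (hd ys) \<Longrightarrow> traj_prob \<pi> K s1 ys = 0"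
  by (auto simp: traj_prob_def)

lemma traj_prob_Cons:
  "traj_prob \<pi> K s0 ((s,a) # ys) =
    (if s = s0 then \<pi> s a * (if ys = [] then 1 else K 0 s a (fst (hd ys)) * traj_prob \<pi> (\<lambda>t. K (Suc t)) (fst (hd ys)) ys) else 0)"
proof (cases ys)
  case Nil then show ?thesis by (simp add: traj_prob_def)
next
  case (Cons y zs)
  show ?thesis using Cons
    by (simp add: traj_prob_def prod.lessThan_Suc_shift del: prod.lessThan_Suc)
qed


lemma traj_cost_Cons:
  assumes "0 \<le> \<gamma>"
  shows "traj_cost sig P r \<gamma> K ((s,a) # ys) =
    ereal (r s a) + ereal \<gamma> * penalty (sig (P s a)) (K 0 s a) + ereal \<gamma> * traj_cost sig P r \<gamma> (\<lambda>t. K (Suc t)) ys"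
proof -
  have "traj_cost sig P r \<gamma> K ((s,a) # ys) =
     (ereal (r s a) + ereal \<gamma> * penalty (sig (P s a)) (K 0 s a)) +
     (\<Sum>t<length ys. ereal (\<gamma> ^ Suc t) *
        (ereal (r (fst (ys ! t)) (snd (ys ! t))) +
         ereal \<gamma> * penalty (sig (P (fst (ys ! t)) (snd (ys ! t))))
                           (K (Suc t) (fst (ys ! t)) (snd (ys ! t)))))"
    unfolding traj_cost_def by (simp add: sum.lessThan_Suc_shift del: sum.lessThan_Suc add: one_ereal_def[symmetric])
  also have "(\<Sum>t<length ys. ereal (\<gamma> ^ Suc t) *
        (ereal (r (fst (ys ! t)) (snd (ys ! t))) +
         ereal \<gamma> * penalty (sig (P (fst (ys ! t)) (snd (ys ! t))))
                           (K (Suc t) (fst (ys ! t)) (snd (ys ! t))))) =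
        ereal \<gamma> * traj_cost sig P r \<gamma> (\<lambda>t. K (Suc t)) ys"
    unfolding traj_cost_def ereal_nn_sum_distrib[OF assms]
    by (simp add: mult.assoc[symmetric])
  finally show ?thesis by (simp add: add.assoc)
qed


lemma sum_single_UNIV:
  fixes f :: "'x::finite \<Rightarrow> 'b::comm_monoid_add"
  assumes "\<And>x. x \<noteq> c \<Longrightarrow> f x = 0" shows "sum f UNIV = f c"
  by (subst sum.remove[of UNIV c]) (auto intro!: sum.neutral simp: assms)

lemma ereal_mult3: "ereal (a * b) * g = ereal a * (ereal b * g)"
  by (simp add: mult.assoc[symmetric])

definition valid :: "nat \<Rightarrow> (nat \<Rightarrow> 's::finite \<Rightarrow> 'a::finite \<Rightarrow> 's \<Rightarrow> real) \<Rightarrow> bool" where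
  "valid n K \<longleftrightarrow> (\<forall>t<n. \<forall>s a. K t s a \<in> simplex)"

locale rmdp =
  fixes P :: "'s::finite \<Rightarrow> 'a::finite \<Rightarrow> 's \<Rightarrow> real"
    and r :: "'s \<Rightarrow> 'a \<Rightarrow> real"
    and \<gamma> :: real
    and \<pi> :: "'s \<Rightarrow> 'a \<Rightarrow> real"
    and sig :: "('s \<Rightarrow> real) \<Rightarrow> ('s \<Rightarrow> real) \<Rightarrow> real"
  assumes Pv: "\<forall>s a. P s a \<in> simplex"
    and rv: "\<forall>s a. 0 \<le> r s a \<and> r s a \<le> 1"
    and gam0: "0 \<le> \<gamma>" and gam1: "\<gamma> < 1"
    and piv: "\<forall>s. \<pi> s \<in> simplex"
    and dual: "\<forall>s a V. ereal (sig (P s a) V) =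
                 (SUP \<mu>\<in>simplex. ereal (- expect \<mu> V) - penalty (sig (P s a)) \<mu>)"
begin

abbreviation "TP \<equiv> traj_prob \<pi>"
abbreviation "EC \<equiv> exp_cost sig P r \<gamma> \<pi>"
abbreviation "pen s a \<equiv> penalty (sig (P s a))"

lemma pi_nonneg: "0 \<le> \<pi> s a" using piv simplex_nonneg by blast

lemma TP_nonneg: "valid m K \<Longrightarrow> length ys \<le> Suc m \<Longrightarrow> 0 \<le> TP K s ys"
proof -
  assume v: "valid m K" and l: "length ys \<le> Suc m"
  have "0 \<le> K t s' a s''" if "t < length ys - 1" for t s' a s''
  proof -
    have "K t s' a \<in> simplex" using v l that by (simp add: valid_def)
    then show ?thesis by (rule simplex_nonneg)
  qed
  then show ?thesis
    unfolding traj_prob_def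
    by (auto intro!: mult_nonneg_nonneg prod_nonneg pi_nonneg)
qed

lemma dec1:
  "(\<Sum>xs\<in>{xs. length xs = Suc 0}. ereal (TP K s xs) * G xs) = (\<Sum>a\<in>UNIV. ereal (\<pi> s a) * G [(s,a)])"
proof -
  have "(\<Sum>xs\<in>{xs. length xs = Suc 0}. ereal (TP K s xs) * G xs) =
     (\<Sum>a\<in>UNIV. \<Sum>ys\<in>{ys. length ys = 0}. ereal (TP K s ((s,a)#ys)) * G ((s,a)#ys))"
    by (rule sum_lists_Suc_state) (simp add: traj_prob_Cons)
  also have "{ys::('s\<times>'a) list. length ys = 0} = {[]}" by auto
  finally show ?thesis by (simp add: traj_prob_Cons)
qed

lemma dec2:
  assumes v: "valid (Suc m) K"
  shows "(\<Sum>xs\<in>{xs. length xs = Suc (Suc m)}. ereal (TP K s xs) * G xs) =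
    (\<Sum>a\<in>UNIV. \<Sum>s1\<in>UNIV. ereal (\<pi> s a * K 0 s a s1) *
       (\<Sum>ys\<in>{ys. length ys = Suc m}. ereal (TP (\<lambda>t. K (Suc t)) s1 ys) * G ((s,a)#ys)))"
proof -
  let ?K' = "\<lambda>t. K (Suc t)"
  have v': "valid m ?K'" using v by (auto simp: valid_def)
  have K0: "0 \<le> K 0 s a s1" for s a s1
  proof -
    have "K 0 s a \<in> simplex" using v by (simp add: valid_def)
    then show ?thesis by (rule simplex_nonneg)
  qed
  have "(\<Sum>xs\<in>{xs. length xs = Suc (Suc m)}. ereal (TP K s xs) * G xs) =
     (\<Sum>a\<in>UNIV. \<Sum>ys\<in>{ys. length ys = Suc m}. ereal (TP K s ((s,a)#ys)) * G ((s,a)#ys))"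
    by (rule sum_lists_Suc_state) (simp add: traj_prob_Cons)
  also have "\<dots> = (\<Sum>a\<in>UNIV. \<Sum>ys\<in>{ys. length ys = Suc m}. \<Sum>s1\<in>UNIV.
       ereal (\<pi> s a * K 0 s a s1) * (ereal (TP ?K' s1 ys) * G ((s,a)#ys)))"
  proof (intro sum.cong refl)
    fix a ys assume ys: "ys \<in> {ys::('s\<times>'a) list. length ys = Suc m}"
    then have ne: "ys \<noteq> []" by auto
    have "TP K s ((s,a)#ys) = (\<Sum>s1\<in>UNIV. \<pi> s a * K 0 s a s1 * TP ?K' s1 ys)"
      using ne by (subst sum_single_UNIV[where c="fst (hd ys)"]) (auto simp: traj_prob_Cons traj_prob_other)
    then have "ereal (TP K s ((s,a)#ys)) * G ((s,a)#ys) =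
        (\<Sum>s1\<in>UNIV. ereal (\<pi> s a * K 0 s a s1 * TP ?K' s1 ys) * G ((s,a)#ys))"
      using ys by (simp add: ereal_sum_left pi_nonneg K0 TP_nonneg[OF v'])
    then show "ereal (TP K s ((s,a)#ys)) * G ((s,a)#ys) = (\<Sum>s1\<in>UNIV.
       ereal (\<pi> s a * K 0 s a s1) * (ereal (TP ?K' s1 ys) * G ((s,a)#ys)))"
      by (simp add: ereal_mult3)
  qed
  also have "\<dots> = (\<Sum>a\<in>UNIV. \<Sum>s1\<in>UNIV. \<Sum>ys\<in>{ys. length ys = Suc m}.
       ereal (\<pi> s a * K 0 s a s1) * (ereal (TP ?K' s1 ys) * G ((s,a)#ys)))"
    by (simp add: sum.swap[where A="{ys. length ys = Suc m}"])
  also have "\<dots> = (\<Sum>a\<in>UNIV. \<Sum>s1\<in>UNIV. ereal (\<pi> s a * K 0 s a s1) *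
       (\<Sum>ys\<in>{ys. length ys = Suc m}. ereal (TP ?K' s1 ys) * G ((s,a)#ys)))"
    by (simp add: ereal_nn_sum_distrib pi_nonneg K0)
  finally show ?thesis .
qed


lemma K_nonneg: "valid n K \<Longrightarrow> t < n \<Longrightarrow> 0 \<le> K t s a s1"
  by (simp add: valid_def simplex_nonneg)

lemma valid_shift: "valid (Suc n) K \<Longrightarrow> valid n (\<lambda>t. K (Suc t))"
  by (simp add: valid_def)

lemma prob_sum: "valid m K \<Longrightarrow> (\<Sum>ys\<in>{ys. length ys = Suc m}. ereal (TP K s ys)) = 1"
proof (induction m arbitrary: K s)
  case 0
  have "(\<Sum>ys\<in>{ys. length ys = Suc 0}. ereal (TP K s ys)) = (\<Sum>a\<in>UNIV. ereal (\<pi> s a))"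
    using dec1[where G="\<lambda>_. 1" and K=K and s=s] by simp
  also have "\<dots> = 1" using piv by (simp add: sum_ereal simplex_sum)
  finally show ?case .
next
  case (Suc m)
  have "(\<Sum>ys\<in>{ys. length ys = Suc (Suc m)}. ereal (TP K s ys)) =
     (\<Sum>a\<in>UNIV. \<Sum>s1\<in>UNIV. ereal (\<pi> s a * K 0 s a s1) *
       (\<Sum>ys\<in>{ys. length ys = Suc m}. ereal (TP (\<lambda>t. K (Suc t)) s1 ys)))"
    using dec2[where G="\<lambda>_. 1" and K=K and s=s, OF Suc.prems] by simp
  also have "\<dots> = (\<Sum>a\<in>UNIV. \<Sum>s1\<in>UNIV. ereal (\<pi> s a * K 0 s a s1))"
    using Suc.IH[OF valid_shift[OF Suc.prems]] by simp
  also have "\<dots> = ereal (\<Sum>a\<in>UNIV. \<pi> s a * (\<Sum>s1\<in>UNIV. K 0 s a s1))"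
    by (simp add: sum_ereal sum_distrib_left)
  also have "\<dots> = 1"
  proof -
    have "K 0 s a \<in> simplex" for a using Suc.prems by (simp add: valid_def)
    then show ?thesis using piv by (simp add: simplex_sum)
  qed
  finally show ?case .
qed

lemma EC_0: "EC K 0 s = 0"
proof -
  have e: "{xs::('s\<times>'a) list. length xs = 0} = {[]}" by auto
  show ?thesis unfolding exp_cost_def e by (simp add: traj_prob_def)
qed

lemma dec:
  assumes v: "valid (Suc n) K"
  shows "EC K (Suc n) s = (\<Sum>a\<in>UNIV. ereal (\<pi> s a) * (ereal (r s a) + ereal \<gamma> *
      (pen s a (K 0 s a) + (\<Sum>s'\<in>UNIV. ereal (K 0 s a s') * EC (\<lambda>t. K (Suc t)) n s'))))"
proof (cases n)
  case 0
  have "EC K (Suc 0) s = (\<Sum>a\<in>UNIV. ereal (\<pi> s a) * traj_cost sig P r \<gamma> K [(s,a)])"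
    unfolding exp_cost_def by (rule dec1)
  then show ?thesis using 0 gam0 by (simp add: EC_0 traj_cost_Cons traj_cost_def)
next
  case (Suc m)
  let ?K' = "\<lambda>t. K (Suc t)"
  let ?c = "\<lambda>a. ereal (r s a) + ereal \<gamma> * pen s a (K 0 s a)"
  have v': "valid (Suc m) ?K'" using v Suc by (simp add: valid_def)
  have vm: "valid m ?K'" using v Suc by (simp add: valid_def)
  have vSm: "valid (Suc m) K" using v Suc by (simp add: valid_def)
  have tpn: "ys \<in> {ys. length ys = Suc m} \<Longrightarrow> 0 \<le> TP ?K' s1 ys" for ys s1
    by (rule TP_nonneg[OF vm]) simp
  have inner: "(\<Sum>ys\<in>{ys. length ys = Suc m}. ereal (TP ?K' s1 ys) * traj_cost sig P r \<gamma> K ((s,a)#ys))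
      = ?c a + ereal \<gamma> * EC ?K' (Suc m) s1" for a s1
  proof -
    have "(\<Sum>ys\<in>{ys. length ys = Suc m}. ereal (TP ?K' s1 ys) * traj_cost sig P r \<gamma> K ((s,a)#ys))
      = (\<Sum>ys\<in>{ys. length ys = Suc m}. ereal (TP ?K' s1 ys) * ?c a +
           ereal \<gamma> * (ereal (TP ?K' s1 ys) * traj_cost sig P r \<gamma> ?K' ys))"
      by (intro sum.cong refl)
         (simp add: traj_cost_Cons[OF gam0] ereal_nn_distrib tpn mult.left_commute)
    also have "\<dots> = (\<Sum>ys\<in>{ys. length ys = Suc m}. ereal (TP ?K' s1 ys)) * ?c a +
           ereal \<gamma> * EC ?K' (Suc m) s1"
    proof -
      have "ereal (\<Sum>ys\<in>{ys. length ys = Suc m}. TP ?K' s1 ys) * ?c a =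
        (\<Sum>ys\<in>{ys. length ys = Suc m}. ereal (TP ?K' s1 ys) * ?c a)"
        by (rule ereal_sum_left) (rule tpn)
      then show ?thesis
        unfolding exp_cost_def sum.distrib ereal_nn_sum_distrib[OF gam0]
        by (simp add: sum_ereal)
    qed
    also have "\<dots> = ?c a + ereal \<gamma> * EC ?K' (Suc m) s1"
      using prob_sum[OF vm] by simp
    finally show ?thesis .
  qed
  have "EC K (Suc n) s = (\<Sum>a\<in>UNIV. \<Sum>s1\<in>UNIV. ereal (\<pi> s a * K 0 s a s1) *
       (\<Sum>ys\<in>{ys. length ys = Suc m}. ereal (TP ?K' s1 ys) * traj_cost sig P r \<gamma> K ((s,a)#ys)))"
    unfolding exp_cost_def Suc by (rule dec2[where G="traj_cost sig P r \<gamma> K", OF vSm])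
  also have "\<dots> = (\<Sum>a\<in>UNIV. \<Sum>s1\<in>UNIV. ereal (\<pi> s a * K 0 s a s1) *
       (?c a + ereal \<gamma> * EC ?K' (Suc m) s1))"
    by (simp only: inner)
  also have "\<dots> = (\<Sum>a\<in>UNIV. ereal (\<pi> s a) * (?c a + ereal \<gamma> *
       (\<Sum>s1\<in>UNIV. ereal (K 0 s a s1) * EC ?K' (Suc m) s1)))"
  proof (intro sum.cong refl)
    fix a
    have "(\<Sum>s1\<in>UNIV. ereal (\<pi> s a * K 0 s a s1) * (?c a + ereal \<gamma> * EC ?K' (Suc m) s1))
      = (\<Sum>s1\<in>UNIV. ereal (\<pi> s a * K 0 s a s1) * ?c a) +
        (\<Sum>s1\<in>UNIV. ereal (\<pi> s a) * (ereal \<gamma> * (ereal (K 0 s a s1) * EC ?K' (Suc m) s1)))"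
      unfolding sum.distrib[symmetric]
      by (intro sum.cong refl)
         (simp add: ereal_nn_distrib pi_nonneg K_nonneg[OF v] ereal_mult3 mult.left_commute)
    also have "\<dots> = ereal (\<Sum>s1\<in>UNIV. \<pi> s a * K 0 s a s1) * ?c a +
        ereal (\<pi> s a) * (ereal \<gamma> * (\<Sum>s1\<in>UNIV. ereal (K 0 s a s1) * EC ?K' (Suc m) s1))"
      by (simp add: ereal_sum_left ereal_nn_sum_distrib pi_nonneg K_nonneg[OF v] gam0)
    also have "(\<Sum>s1\<in>UNIV. \<pi> s a * K 0 s a s1) = \<pi> s a"
    proof -
      have "K 0 s a \<in> simplex" using v by (simp add: valid_def)
      then show ?thesis by (simp add: sum_distrib_left[symmetric] simplex_sum)
    qed
    finally show "(\<Sum>s1\<in>UNIV. ereal (\<pi> s a * K 0 s a s1) * (?c a + ereal \<gamma> * EC ?K' (Suc m) s1))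
      = ereal (\<pi> s a) * (?c a + ereal \<gamma> * (\<Sum>s1\<in>UNIV. ereal (K 0 s a s1) * EC ?K' (Suc m) s1))"
      by (simp add: ereal_nn_distrib pi_nonneg)
  qed
  finally show ?thesis using Suc by (simp add: ereal_nn_distrib[OF gam0] add.assoc)
qed

end

lemma simplex_seq_compact:
  fixes \<mu> :: "nat \<Rightarrow> 's::finite \<Rightarrow> real"
  assumes "\<forall>k. \<mu> k \<in> simplex"
  shows "\<exists>l\<in>simplex. \<exists>\<rho>. strict_mono \<rho> \<and> (\<forall>i. (\<lambda>k. \<mu> (\<rho> k) i) \<longlonglongrightarrow> l i)"
proof -
  define S where "S = {x::real^'s. (\<forall>i. 0 \<le> x$i) \<and> (\<Sum>i\<in>UNIV. x$i) = 1}"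
  have "S = cbox 0 1 \<inter> {x. (\<Sum>i\<in>UNIV. x$i) = 1}"
  proof -
    have "x $ i \<le> 1" if "x \<in> S" for x i
    proof -
      have "x $ i \<le> (\<Sum>i\<in>UNIV. x$i)" using that by (intro member_le_sum) (auto simp: S_def)
      then show ?thesis using that by (simp add: S_def)
    qed
    then show ?thesis by (auto simp: S_def mem_box_cart)
  qed
  moreover have "closed {x::real^'s. (\<Sum>i\<in>UNIV. x$i) = 1}"
    by (intro closed_Collect_eq continuous_intros)
  ultimately have "compact S" by (simp add: compact_Int_closed)
  then have sc: "seq_compact S" by (rule compact_imp_seq_compact)
  define x where "x k = (\<chi> i. \<mu> k i)" for k
  have "\<forall>k. x k \<in> S" using assms by (auto simp: x_def S_def simplex_def)
  then obtain l \<rho> where l: "l \<in> S" "strict_mono \<rho>" "(x \<circ> \<rho>) \<longlonglongrightarrow> l"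
    using seq_compactE[OF sc] by metis
  have "(\<lambda>k. \<mu> (\<rho> k) i) \<longlonglongrightarrow> l $ i" for i
    using tendsto_vec_nth[OF l(3), of i] by (simp add: x_def o_def)
  moreover have "(\<lambda>i. l $ i) \<in> simplex" using l(1) by (simp add: S_def simplex_def)
  ultimately show ?thesis using l(2) by blast
qed


lemma pen_lb: "ereal (- \<sigma> (\<lambda>_. 0)) \<le> penalty \<sigma> \<mu>"
  unfolding penalty_def by (rule SUP_upper2[where i="\<lambda>_. 0"]) (auto simp: expect_def)

lemma pen_ge: "ereal (- \<sigma> W - expect \<mu> W) \<le> penalty \<sigma> \<mu>"
  unfolding penalty_def by (rule SUP_upper) simp

lemma infl:
  assumes du: "\<forall>V. ereal (\<sigma> V) = (SUP \<mu>\<in>simplex. ereal (- expect \<mu> V) - penalty \<sigma> \<mu>)"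
    and mu: "\<mu> \<in> simplex"
  shows "ereal (- \<sigma> V) \<le> penalty \<sigma> \<mu> + ereal (expect \<mu> V)"
proof -
  have "ereal (- expect \<mu> V) - penalty \<sigma> \<mu> \<le> ereal (\<sigma> V)"
    unfolding du[rule_format] using mu by (rule SUP_upper)
  moreover have "penalty \<sigma> \<mu> \<noteq> -\<infinity>" using pen_lb[of \<sigma> \<mu>] by auto
  ultimately show ?thesis by (cases "penalty \<sigma> \<mu>") auto
qed

lemma attain:
  fixes \<sigma> :: "('s::finite \<Rightarrow> real) \<Rightarrow> real"
  assumes du: "\<forall>V. ereal (\<sigma> V) = (SUP \<mu>\<in>simplex. ereal (- expect \<mu> V) - penalty \<sigma> \<mu>)"
  shows "\<exists>\<mu>\<in>simplex. penalty \<sigma> \<mu> + ereal (expect \<mu> V) \<le> ereal (- \<sigma> V)"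
proof -
  have "\<exists>\<mu>\<in>simplex. \<forall>W. - \<sigma> W - expect \<mu> W + expect \<mu> V \<le> - \<sigma> V + inverse (real (Suc k))" for k
  proof -
    have "ereal (\<sigma> V - inverse (real (Suc k))) < ereal (\<sigma> V)" by simp
    then obtain \<mu> where mu: "\<mu> \<in> simplex"
      and lt: "ereal (\<sigma> V - inverse (real (Suc k))) < ereal (- expect \<mu> V) - penalty \<sigma> \<mu>"
      unfolding du[rule_format] less_SUP_iff by blast
    have "penalty \<sigma> \<mu> \<noteq> -\<infinity>" using pen_lb[of \<sigma> \<mu>] by auto
    moreover have "penalty \<sigma> \<mu> \<noteq> \<infinity>" using lt by auto
    ultimately obtain p where p: "penalty \<sigma> \<mu> = ereal p" by (cases "penalty \<sigma> \<mu>") auto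
    have "- \<sigma> W - expect \<mu> W + expect \<mu> V \<le> - \<sigma> V + inverse (real (Suc k))" for W
    proof -
      have "ereal (- \<sigma> W - expect \<mu> W) \<le> ereal p" using pen_ge[of \<sigma> W \<mu>] p by simp
      then show ?thesis using lt p by simp
    qed
    then show ?thesis using mu by blast
  qed
  then obtain \<mu> where mu: "\<And>k. \<mu> k \<in> simplex"
    and ineq: "\<And>k W. - \<sigma> W - expect (\<mu> k) W + expect (\<mu> k) V \<le> - \<sigma> V + inverse (real (Suc k))"
    by metis
  obtain l \<rho> where l: "l \<in> simplex" "strict_mono \<rho>" "\<And>i. (\<lambda>k. \<mu> (\<rho> k) i) \<longlonglongrightarrow> l i"
    using simplex_seq_compact[of \<mu>] mu by blast
  have ex: "(\<lambda>k. expect (\<mu> (\<rho> k)) U) \<longlonglongrightarrow> expect l U" for U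
    unfolding expect_def by (intro tendsto_intros l(3))
  have bnd: "- \<sigma> W - expect l W + expect l V \<le> - \<sigma> V" for W
  proof -
    have "(\<lambda>k. - \<sigma> W - expect (\<mu> (\<rho> k)) W + expect (\<mu> (\<rho> k)) V) \<longlonglongrightarrow> - \<sigma> W - expect l W + expect l V"
      by (intro tendsto_intros ex)
    moreover have "(\<lambda>k. - \<sigma> V + inverse (real (Suc k))) \<longlonglongrightarrow> - \<sigma> V + 0"
      by (intro tendsto_intros LIMSEQ_inverse_real_of_nat)
    moreover have "\<forall>k. - \<sigma> W - expect (\<mu> (\<rho> k)) W + expect (\<mu> (\<rho> k)) V \<le> - \<sigma> V + inverse (real (Suc k))"
    proof
      fix k
      have "k \<le> \<rho> k" using seq_suble[OF l(2)] .
      then have "inverse (real (Suc (\<rho> k))) \<le> inverse (real (Suc k))"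
        by (simp add: le_imp_inverse_le)
      then show "- \<sigma> W - expect (\<mu> (\<rho> k)) W + expect (\<mu> (\<rho> k)) V \<le> - \<sigma> V + inverse (real (Suc k))"
        using ineq[where k="\<rho> k" and W=W] by linarith
    qed
    ultimately show ?thesis by (intro LIMSEQ_le) auto
  qed
  have "penalty \<sigma> l \<le> ereal (- \<sigma> V - expect l V)"
    unfolding penalty_def
  proof (rule SUP_least)
    fix W :: "'s \<Rightarrow> real" assume "W \<in> UNIV"
    show "ereal (- \<sigma> W - expect l W) \<le> ereal (- \<sigma> V - expect l V)"
      using bnd[of W] by simp
  qed
  then have "penalty \<sigma> l + ereal (expect l V) \<le> ereal (- \<sigma> V)"
    by (cases "penalty \<sigma> l") auto
  then show ?thesis using l(1) by blast
qed


context rmdp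
begin

definition "Wv n = Vbar sig P r \<gamma> \<pi> (int n - 1)"
abbreviation "AM V \<equiv> argmin_set sig P V"

lemma Wv_0: "Wv 0 s = 0" by (simp add: Vbar_def Wv_def)

lemma Wv_Suc: "Wv (Suc n) s = (INF K\<in>{K. \<forall>t s a. K t s a \<in> simplex}. EC K (Suc n) s)"
proof -
  have "nat (int (Suc n) - 1 + 1) = Suc n" by simp
  then show ?thesis unfolding Wv_def Vbar_def by (simp only:) simp
qed

lemma Wv_le: "\<forall>t s a. K t s a \<in> simplex \<Longrightarrow> Wv n s \<le> EC K n s"
  by (cases n) (auto simp only: Wv_0 EC_0 Wv_Suc intro!: INF_lower)

lemma sum_ereal_expect: "(\<Sum>s'\<in>UNIV. ereal (\<mu> s') * ereal (V s')) = ereal (expect \<mu> V)"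
  by (simp add: expect_def sum_ereal)

lemma infl_loc: "\<mu> \<in> simplex \<Longrightarrow>
   ereal (- sig (P s a) V) \<le> pen s a \<mu> + (\<Sum>s'\<in>UNIV. ereal (\<mu> s') * ereal (V s'))"
  unfolding sum_ereal_expect by (rule infl) (use dual in auto)

lemma amin_ne: "AM (\<lambda>s'. ereal (V s')) s a \<noteq> {}"
proof -
  obtain \<mu> where mu: "\<mu> \<in> simplex" "pen s a \<mu> + ereal (expect \<mu> V) \<le> ereal (- sig (P s a) V)"
    using attain[of "sig (P s a)" V] dual by blast
  have "\<mu> \<in> AM (\<lambda>s'. ereal (V s')) s a"
    unfolding argmin_set_def
  proof (intro CollectI conjI ballI mu(1))
    fix \<nu> :: "'s \<Rightarrow> real" assume nu: "\<nu> \<in> simplex"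
    show "pen s a \<mu> + (\<Sum>s'\<in>UNIV. ereal (\<mu> s') * ereal (V s')) \<le> pen s a \<nu> + (\<Sum>s'\<in>UNIV. ereal (\<nu> s') * ereal (V s'))"
      using mu(2) infl_loc[OF nu, of s a V] unfolding sum_ereal_expect by (rule order.trans)
  qed
  then show ?thesis by blast
qed

lemma amin_val:
  assumes "\<mu> \<in> AM (\<lambda>s'. ereal (V s')) s a"
  shows "pen s a \<mu> + (\<Sum>s'\<in>UNIV. ereal (\<mu> s') * ereal (V s')) = ereal (- sig (P s a) V)"
proof -
  obtain \<nu> where nu: "\<nu> \<in> simplex" "pen s a \<nu> + ereal (expect \<nu> V) \<le> ereal (- sig (P s a) V)"
    using attain[of "sig (P s a)" V] dual by blast
  have mu: "\<mu> \<in> simplex" using assms by (simp add: argmin_set_def)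
  have "pen s a \<mu> + (\<Sum>s'\<in>UNIV. ereal (\<mu> s') * ereal (V s')) \<le> pen s a \<nu> + (\<Sum>s'\<in>UNIV. ereal (\<nu> s') * ereal (V s'))"
    using assms nu(1) unfolding argmin_set_def by blast
  then show ?thesis using nu(2) infl_loc[OF mu, of s a V] unfolding sum_ereal_expect by (rule_tac antisym) auto
qed

lemma Tpi_ereal: "ereal (Tpi sig P r \<gamma> \<pi> V s) =
   (\<Sum>a\<in>UNIV. ereal (\<pi> s a) * (ereal (r s a) + ereal \<gamma> * ereal (- sig (P s a) V)))"
  by (simp add: Tpi_def sum_ereal)

lemma am_simplex: "\<mu> \<in> AM V s a \<Longrightarrow> \<mu> \<in> simplex" by (simp add: argmin_set_def)

lemma claimC:
  assumes Vn: "\<forall>s. Wv n s = ereal (V s)"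
    and IIn: "\<forall>K. (\<forall>t<n. \<forall>s a. K t s a \<in> AM (Wv (n - 1 - t)) s a) \<longrightarrow> (\<forall>s. EC K n s = Wv n s)"
    and K0: "\<forall>s a. K 0 s a \<in> AM (Wv n) s a"
    and KS: "\<forall>t<n. \<forall>s a. K (Suc t) s a \<in> AM (Wv (n - 1 - t)) s a"
  shows "EC K (Suc n) s = ereal (Tpi sig P r \<gamma> \<pi> V s)"
proof -
  have Wf: "Wv n = (\<lambda>s. ereal (V s))" using Vn by auto
  have v: "valid (Suc n) K" unfolding valid_def
  proof (intro allI impI)
    fix t s a assume "t < Suc n"
    then show "K t s a \<in> simplex" using K0 KS by (cases t) (blast intro: am_simplex)+
  qed
  have EC': "EC (\<lambda>t. K (Suc t)) n s' = ereal (V s')" for s'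
    using IIn KS Vn by auto
  show ?thesis
    unfolding dec[OF v] EC' Tpi_ereal
    using amin_val K0[unfolded Wf] by simp
qed

lemma step:
  assumes Vn: "\<forall>s. Wv n s = ereal (V s)"
    and IIn: "\<forall>K. (\<forall>t<n. \<forall>s a. K t s a \<in> AM (Wv (n - 1 - t)) s a) \<longrightarrow> (\<forall>s. EC K n s = Wv n s)"
    and IIIn: "\<exists>K. (\<forall>t s a. K t s a \<in> simplex) \<and> (\<forall>t<n. \<forall>s a. K t s a \<in> AM (Wv (n - 1 - t)) s a)"
  shows "(\<forall>s. Wv (Suc n) s = ereal (Tpi sig P r \<gamma> \<pi> V s))
    \<and> (\<forall>K. (\<forall>t<Suc n. \<forall>s a. K t s a \<in> AM (Wv (Suc n - 1 - t)) s a) \<longrightarrow> (\<forall>s. EC K (Suc n) s = Wv (Suc n) s))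
    \<and> (\<exists>K. (\<forall>t s a. K t s a \<in> simplex) \<and> (\<forall>t<Suc n. \<forall>s a. K t s a \<in> AM (Wv (Suc n - 1 - t)) s a))"
proof -
  have Wf: "Wv n = (\<lambda>s. ereal (V s))" using Vn by auto
  obtain Ko where Ko: "\<forall>t s a. Ko t s a \<in> simplex" "\<forall>t<n. \<forall>s a. Ko t s a \<in> AM (Wv (n - 1 - t)) s a"
    using IIIn by blast
  define mu where "mu s a = (SOME \<mu>. \<mu> \<in> AM (Wv n) s a)" for s a
  have mu: "mu s a \<in> AM (Wv n) s a" for s a
    unfolding mu_def Wf using amin_ne[of V s a] by (simp add: some_in_eq)
  define Kn where "Kn t = (case t of 0 \<Rightarrow> mu | Suc t' \<Rightarrow> Ko t')" for t
  have Kn_simplex: "\<forall>t s a. Kn t s a \<in> simplex"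
    using Ko(1) am_simplex[OF mu] by (auto simp: Kn_def split: nat.splits)
  have Kn_am: "\<forall>t<Suc n. \<forall>s a. Kn t s a \<in> AM (Wv (Suc n - 1 - t)) s a"
  proof (intro allI impI)
    fix t s a assume "t < Suc n"
    then show "Kn t s a \<in> AM (Wv (Suc n - 1 - t)) s a"
      using Ko(2) mu by (cases t) (auto simp: Kn_def)
  qed
  have II: "\<forall>K. (\<forall>t<Suc n. \<forall>s a. K t s a \<in> AM (Wv (Suc n - 1 - t)) s a) \<longrightarrow> (\<forall>s. EC K (Suc n) s = ereal (Tpi sig P r \<gamma> \<pi> V s))"
  proof (intro allI impI)
    fix K s assume A: "\<forall>t<Suc n. \<forall>s a. K t s a \<in> AM (Wv (Suc n - 1 - t)) s a"
    have "\<forall>s a. K 0 s a \<in> AM (Wv n) s a" using A by auto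
    moreover have "\<forall>t<n. \<forall>s a. K (Suc t) s a \<in> AM (Wv (n - 1 - t)) s a"
    proof (intro allI impI)
      fix t s a assume "t < n"
      then show "K (Suc t) s a \<in> AM (Wv (n - 1 - t)) s a" using A[rule_format, of "Suc t" s a] by simp
    qed
    ultimately show "EC K (Suc n) s = ereal (Tpi sig P r \<gamma> \<pi> V s)"
      by (rule claimC[OF Vn IIn])
  qed
  have Wsuc: "Wv (Suc n) s = ereal (Tpi sig P r \<gamma> \<pi> V s)" for s
  proof (rule antisym)
    show "Wv (Suc n) s \<le> ereal (Tpi sig P r \<gamma> \<pi> V s)"
      using Wv_le[OF Kn_simplex, of "Suc n" s] II Kn_am by auto
  next
    show "ereal (Tpi sig P r \<gamma> \<pi> V s) \<le> Wv (Suc n) s"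
      unfolding Wv_Suc
    proof (rule INF_greatest)
      fix K :: "nat \<Rightarrow> 's \<Rightarrow> 'a \<Rightarrow> 's \<Rightarrow> real" assume "K \<in> {K. \<forall>t s a. K t s a \<in> simplex}"
      then have Kv: "\<forall>t s a. K t s a \<in> simplex" by simp
      then have v: "valid (Suc n) K" by (simp add: valid_def)
      have Kv': "\<forall>t s a. K (Suc t) s a \<in> simplex" using Kv by simp
      have "ereal (Tpi sig P r \<gamma> \<pi> V s) \<le> (\<Sum>a\<in>UNIV. ereal (\<pi> s a) * (ereal (r s a) + ereal \<gamma> *
      (pen s a (K 0 s a) + (\<Sum>s'\<in>UNIV. ereal (K 0 s a s') * EC (\<lambda>t. K (Suc t)) n s'))))"
        unfolding Tpi_ereal
      proof (intro sum_mono ereal_mult_left_mono add_mono order.refl)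
        fix a
        have "ereal (- sig (P s a) V) \<le> pen s a (K 0 s a) + (\<Sum>s'\<in>UNIV. ereal (K 0 s a s') * ereal (V s'))"
          using infl_loc Kv by blast
        also have "\<dots> \<le> pen s a (K 0 s a) + (\<Sum>s'\<in>UNIV. ereal (K 0 s a s') * EC (\<lambda>t. K (Suc t)) n s')"
        proof (intro add_mono order.refl sum_mono ereal_mult_left_mono)
          fix s' show "ereal (V s') \<le> EC (\<lambda>t. K (Suc t)) n s'"
            using Wv_le[OF Kv', of n s'] Vn by simp
          show "0 \<le> ereal (K 0 s a s')" using simplex_nonneg[of "K 0 s a" s'] Kv by simp
        qed
        finally show "ereal (- sig (P s a) V) \<le> pen s a (K 0 s a) + (\<Sum>s'\<in>UNIV. ereal (K 0 s a s') * EC (\<lambda>t. K (Suc t)) n s')" .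
        show "0 \<le> ereal \<gamma>" using gam0 by simp
        show "0 \<le> ereal (\<pi> s a)" using pi_nonneg by simp
      qed
      also have "\<dots> = EC K (Suc n) s" by (rule dec[OF v, symmetric])
      finally show "ereal (Tpi sig P r \<gamma> \<pi> V s) \<le> EC K (Suc n) s" .
    qed
  qed
  show ?thesis using Wsuc II Kn_simplex Kn_am by auto
qed

lemma allQ: "\<exists>V. (\<forall>s. Wv n s = ereal (V s))
   \<and> (\<forall>K. (\<forall>t<n. \<forall>s a. K t s a \<in> AM (Wv (n - 1 - t)) s a) \<longrightarrow> (\<forall>s. EC K n s = Wv n s))
   \<and> (\<exists>K. (\<forall>t s a. K t s a \<in> simplex) \<and> (\<forall>t<n. \<forall>s a. K t s a \<in> AM (Wv (n - 1 - t)) s a))"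
proof (induction n)
  case 0
  have "\<forall>s. Wv 0 s = ereal ((\<lambda>_. 0) s)" by (simp add: Wv_0)
  moreover have "\<forall>K. (\<forall>t<0. \<forall>s a. K t s a \<in> AM (Wv (0 - 1 - t)) s a) \<longrightarrow> (\<forall>s. EC K 0 s = Wv 0 s)"
    by (simp add: EC_0 Wv_0)
  moreover have "\<exists>K. (\<forall>t s a. K t s a \<in> simplex) \<and> (\<forall>t<0. \<forall>s a. K t s a \<in> AM (Wv (0 - 1 - t)) s a)"
    using Pv by (intro exI[of _ "\<lambda>t. P"]) simp
  ultimately show ?case by (intro exI[of _ "\<lambda>_. 0"]) blast
next
  case (Suc n)
  then obtain V where "\<forall>s. Wv n s = ereal (V s)"
    "\<forall>K. (\<forall>t<n. \<forall>s a. K t s a \<in> AM (Wv (n - 1 - t)) s a) \<longrightarrow> (\<forall>s. EC K n s = Wv n s)"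
    "\<exists>K. (\<forall>t s a. K t s a \<in> simplex) \<and> (\<forall>t<n. \<forall>s a. K t s a \<in> AM (Wv (n - 1 - t)) s a)"
    by blast
  from step[OF this] show ?case by blast
qed

end

theorem mainTheorem4:
  fixes P :: "'s::finite \<Rightarrow> 'a::finite \<Rightarrow> 's \<Rightarrow> real"
    and r :: "'s \<Rightarrow> 'a \<Rightarrow> real"
    and \<gamma> :: real
    and \<pi> :: "'s \<Rightarrow> 'a \<Rightarrow> real"
    and sig :: "('s \<Rightarrow> real) \<Rightarrow> ('s \<Rightarrow> real) \<Rightarrow> real"
  assumes P: "\<forall>s a. P s a \<in> simplex"
    and r: "\<forall>s a. 0 \<le> r s a \<and> r s a \<le> 1"
    and \<gamma>: "0 \<le> \<gamma>" "\<gamma> < 1"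
    and \<pi>: "\<forall>s. \<pi> s \<in> simplex"
    and crm: "\<forall>s a. convex_risk_measure (sig (P s a))"
    and dual: "\<forall>s a V. ereal (sig (P s a) V) =
                 (SUP \<mu>\<in>simplex. ereal (- expect \<mu> V) - penalty (sig (P s a)) \<mu>)"
  shows "(\<forall>h::int. h \<ge> -1 \<longrightarrow>
            (\<exists>V. (\<forall>s. Vbar sig P r \<gamma> \<pi> h s = ereal (V s)) \<and>
                 (\<forall>s. Vbar sig P r \<gamma> \<pi> (h + 1) s = ereal (Tpi sig P r \<gamma> \<pi> V s))))
       \<and> (\<forall>h::int. h \<ge> 0 \<longrightarrow>
            (\<forall>t::nat. int t \<le> h \<longrightarrow>
               (\<forall>s a. argmin_set sig P (Vbar sig P r \<gamma> \<pi> (h - int t - 1)) s a \<noteq> {})) \<and>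
            (\<forall>K. (\<forall>t::nat. int t \<le> h \<longrightarrow>
                    (\<forall>s a. K t s a \<in> argmin_set sig P (Vbar sig P r \<gamma> \<pi> (h - int t - 1)) s a))
                 \<longrightarrow> (\<forall>s. exp_cost sig P r \<gamma> \<pi> K (nat (h + 1)) s = Vbar sig P r \<gamma> \<pi> h s)))"
proof -
  interpret rmdp P r \<gamma> \<pi> sig
    using P r \<gamma> \<pi> dual by unfold_locales auto
  have Wv_eq: "Vbar sig P r \<gamma> \<pi> h = Wv (nat (h + 1))" if "h \<ge> -1" for h :: int
  proof -
    have "int (nat (h + 1)) - 1 = h" using that by simp
    then show ?thesis unfolding Wv_def by simp
  qed
  show ?thesis
  proof (rule conjI; intro allI impI)
    fix h :: int assume h: "h \<ge> -1"
    define n where "n = nat (h + 1)"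
    obtain V where V: "\<forall>s. Wv n s = ereal (V s)"
      "\<forall>K. (\<forall>t<n. \<forall>s a. K t s a \<in> AM (Wv (n - 1 - t)) s a) \<longrightarrow> (\<forall>s. EC K n s = Wv n s)"
      "\<exists>K. (\<forall>t s a. K t s a \<in> simplex) \<and> (\<forall>t<n. \<forall>s a. K t s a \<in> AM (Wv (n - 1 - t)) s a)"
      using allQ[of n] by blast
    have S: "\<forall>s. Wv (Suc n) s = ereal (Tpi sig P r \<gamma> \<pi> V s)" using step[OF V] by blast
    have e1: "Vbar sig P r \<gamma> \<pi> h = Wv n" using Wv_eq[OF h] by (simp add: n_def)
    have "nat (h + 1 + 1) = Suc n" using h by (simp add: n_def)
    then have e2: "Vbar sig P r \<gamma> \<pi> (h + 1) = Wv (Suc n)" using Wv_eq[of "h + 1"] h by simp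
    show "\<exists>V. (\<forall>s. Vbar sig P r \<gamma> \<pi> h s = ereal (V s)) \<and>
                 (\<forall>s. Vbar sig P r \<gamma> \<pi> (h + 1) s = ereal (Tpi sig P r \<gamma> \<pi> V s))"
      using V(1) S unfolding e1 e2 by blast
  next
    fix h :: int assume h: "h \<ge> 0"
    define n where "n = nat (h + 1)"
    have et: "Vbar sig P r \<gamma> \<pi> (h - int t - 1) = Wv (n - 1 - t)" if "int t \<le> h" for t
    proof -
      have "nat (h - int t - 1 + 1) = n - 1 - t" using that h by (simp add: n_def nat_diff_distrib)
      then show ?thesis using Wv_eq[of "h - int t - 1"] that by simp
    qed
    have tn: "int t \<le> h \<longleftrightarrow> t < n" for t using h by (auto simp: n_def)
    have P1: "\<forall>t. int t \<le> h \<longrightarrow> (\<forall>s a. argmin_set sig P (Vbar sig P r \<gamma> \<pi> (h - int t - 1)) s a \<noteq> {})"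
    proof (intro allI impI)
      fix t s a assume t: "int t \<le> h"
      obtain V where "\<forall>s. Wv (n - 1 - t) s = ereal (V s)" using allQ[of "n - 1 - t"] by blast
      then have "Wv (n - 1 - t) = (\<lambda>s. ereal (V s))" by auto
      then show "argmin_set sig P (Vbar sig P r \<gamma> \<pi> (h - int t - 1)) s a \<noteq> {}"
        unfolding et[OF t] using amin_ne by simp
    qed
    have P2: "\<forall>K. (\<forall>t. int t \<le> h \<longrightarrow> (\<forall>s a. K t s a \<in> argmin_set sig P (Vbar sig P r \<gamma> \<pi> (h - int t - 1)) s a))
                 \<longrightarrow> (\<forall>s. exp_cost sig P r \<gamma> \<pi> K (nat (h + 1)) s = Vbar sig P r \<gamma> \<pi> h s)"
    proof (intro allI impI)
      fix K s
      assume A: "\<forall>t. int t \<le> h \<longrightarrow> (\<forall>s a. K t s a \<in> argmin_set sig P (Vbar sig P r \<gamma> \<pi> (h - int t - 1)) s a)"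
      have B: "\<forall>t<n. \<forall>s a. K t s a \<in> AM (Wv (n - 1 - t)) s a"
        using A et tn by auto
      obtain V where "\<forall>K. (\<forall>t<n. \<forall>s a. K t s a \<in> AM (Wv (n - 1 - t)) s a) \<longrightarrow> (\<forall>s. EC K n s = Wv n s)"
        using allQ[of n] by blast
      then have "EC K n s = Wv n s" using B by blast
      moreover have "Vbar sig P r \<gamma> \<pi> h = Wv n" using Wv_eq h by (simp add: n_def)
      ultimately show "exp_cost sig P r \<gamma> \<pi> K (nat (h + 1)) s = Vbar sig P r \<gamma> \<pi> h s"
        by (simp add: n_def)
    qed
    from P1 P2 show "(\<forall>t::nat. int t \<le> h \<longrightarrow>
               (\<forall>s a. argmin_set sig P (Vbar sig P r \<gamma> \<pi> (h - int t - 1)) s a \<noteq> {})) \<and>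
            (\<forall>K. (\<forall>t::nat. int t \<le> h \<longrightarrow>
                    (\<forall>s a. K t s a \<in> argmin_set sig P (Vbar sig P r \<gamma> \<pi> (h - int t - 1)) s a))
                 \<longrightarrow> (\<forall>s. exp_cost sig P r \<gamma> \<pi> K (nat (h + 1)) s = Vbar sig P r \<gamma> \<pi> h s))"
      by (rule conjI)
  qed
qed

end
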